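(* Let $J$ be an abelian topological semigroup, $X$ a locally convex topological vector space over $\mathbf{C}$, and $n\in\mathbf{Z}_+$. If $P^n(J)$ is finite dimensional, then $P^n(J,X)=P^n(J)\otimes X$, i.e. every $p\in P^n(J,X)$ is of the form $p=\sum_{i=1}^l q_i x_i$ with $q_i\in P^n(J)$ and $x_i\in X$.
   Context: $\mathbf{Z}_+=\{0,1,2,\dots\}$. A continuous $p:J\to X$ is a polynomial of degree at most $n$ if for all $s,t\in J$ the map $m\mapsto p(s+mt)$, $m\in\mathbf{Z}_+$, is a polynomial in $m$ of degree at most $n$ with coefficients in $X$; $P^n(J,X)$ is the space of these, $P^n(J)=P^n(J,\mathbf{C})$. *)

theory Defs
  imports "HOL-Analysis.Analysis" "HOL-Library.Function_Algebras"
begin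

definition ab_top_semigroup :: "'j::{ab_semigroup_add,topological_space} itself \<Rightarrow> bool" where
  "ab_top_semigroup _ \<longleftrightarrow> continuous_on UNIV (\<lambda>(a::'j, b). a + b)"

definition smul_shift :: "'j::ab_semigroup_add \<Rightarrow> nat \<Rightarrow> 'j \<Rightarrow> 'j" where
  "smul_shift s m t = ((\<lambda>x. x + t) ^^ m) s"

definition convex_wrt :: "(complex \<Rightarrow> 'x \<Rightarrow> 'x::ab_group_add) \<Rightarrow> 'x set \<Rightarrow> bool" where
  "convex_wrt sc V \<longleftrightarrow> (\<forall>x\<in>V. \<forall>y\<in>V. \<forall>u::real. 0 \<le> u \<and> u \<le> 1 \<longrightarrow>
      sc (complex_of_real u) x + sc (complex_of_real (1 - u)) y \<in> V)"

text \<open>Locally convex topological vector space over C (the topology is that of the type 'x,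
  Hausdorff by the class constraint used in the statement).\<close>
definition lc_tvs :: "(complex \<Rightarrow> 'x \<Rightarrow> 'x::{ab_group_add,topological_space}) \<Rightarrow> bool" where
  "lc_tvs sc \<longleftrightarrow> vector_space sc
     \<and> continuous_on UNIV (\<lambda>(a::'x, b). a + b)
     \<and> continuous_on UNIV (\<lambda>(c, x). sc c x)
     \<and> (\<forall>U. open U \<and> 0 \<in> U \<longrightarrow> (\<exists>V. open V \<and> 0 \<in> V \<and> V \<subseteq> U \<and> convex_wrt sc V))"

definition Pn :: "(complex \<Rightarrow> 'x \<Rightarrow> 'x::{ab_group_add,topological_space}) \<Rightarrow> nat
    \<Rightarrow> ('j::{ab_semigroup_add,topological_space} \<Rightarrow> 'x) set" where
  "Pn sc n = {p. continuous_on UNIV p \<and>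
     (\<forall>s t. \<exists>c::nat \<Rightarrow> 'x. \<forall>m. p (smul_shift s m t) = (\<Sum>k\<le>n. sc (of_nat m ^ k) (c k)))}"

definition fscale :: "complex \<Rightarrow> ('j \<Rightarrow> complex) \<Rightarrow> ('j \<Rightarrow> complex)" where
  "fscale c f = (\<lambda>j. c * f j)"

end

theory Submission imports Defs begin

locale lcx =
  fixes sc :: "complex \<Rightarrow> 'x::{ab_group_add,t2_space} \<Rightarrow> 'x"
  assumes lc: "lc_tvs sc"
begin

sublocale V: vector_space sc using lc unfolding lc_tvs_def by auto

lemma cadd: "continuous_on UNIV (\<lambda>(a::'x, b). a + b)" using lc unfolding lc_tvs_def by auto
lemma csc: "continuous_on UNIV (\<lambda>(c, x). sc c x)" using lc unfolding lc_tvs_def by auto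

lemma cont_add:
  fixes f g :: "'a::topological_space \<Rightarrow> 'x"
  assumes "continuous_on S f" "continuous_on S g"
  shows "continuous_on S (\<lambda>t. f t + g t)"
proof -
  have "continuous_on S (\<lambda>t. (\<lambda>(a::'x, b). a + b) (f t, g t))"
    by (rule continuous_on_compose2[OF cadd]) (auto intro: continuous_on_Pair assms)
  then show ?thesis by simp
qed

lemma cont_sc:
  fixes f :: "'a::topological_space \<Rightarrow> complex" and g :: "'a \<Rightarrow> 'x"
  assumes "continuous_on S f" "continuous_on S g"
  shows "continuous_on S (\<lambda>t. sc (f t) (g t))"
proof -
  have "continuous_on S (\<lambda>t. (\<lambda>(c, x). sc c x) (f t, g t))"
    by (rule continuous_on_compose2[OF csc]) (auto intro: continuous_on_Pair assms)
  then show ?thesis by simp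
qed

lemma cont_sum:
  fixes f :: "nat \<Rightarrow> 'a::topological_space \<Rightarrow> 'x"
  assumes "\<And>i. i < l \<Longrightarrow> continuous_on S (f i)"
  shows "continuous_on S (\<lambda>t. \<Sum>i<l. f i t)"
  using assms
proof (induction l)
  case 0
  then show ?case by (simp add: continuous_on_const)
next
  case (Suc l)
  then show ?case by (simp add: cont_add)
qed

definition gS :: "'x set \<Rightarrow> 'x \<Rightarrow> real set" where
  "gS V x = {t. 0 < t \<and> sc (of_real (inverse t)) x \<in> V}"

definition gauge :: "'x set \<Rightarrow> 'x \<Rightarrow> real" where
  "gauge V x = Inf (gS V x)"

context
  fixes V assumes Vo: "open V" and V0: "0 \<in> V" and Vc: "convex_wrt sc V"
begin

lemma conv: "x \<in> V \<Longrightarrow> y \<in> V \<Longrightarrow> 0 \<le> u \<Longrightarrow> u \<le> 1 \<Longrightarrow>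
  sc (of_real u) x + sc (of_real (1-u)) y \<in> V"
  using Vc unfolding convex_wrt_def by blast

lemma absorb: "gS V x \<noteq> {}"
proof -
  have "continuous_on UNIV (\<lambda>c. sc c x)"
    by (rule cont_sc) (auto intro: continuous_on_id continuous_on_const)
  then have "open ((\<lambda>c. sc c x) -` V)" using Vo by (rule open_vimage[rotated])
  moreover have "0 \<in> (\<lambda>c. sc c x) -` V" using V0 by simp
  ultimately obtain d where d: "d > 0" "ball 0 d \<subseteq> (\<lambda>c. sc c x) -` V"
    by (meson openE)
  have "of_real (d/2) \<in> ball (0::complex) d" using d by (simp add: dist_norm)
  then have "sc (of_real (d/2)) x \<in> V" using subsetD[OF d(2)] by blast
  then have "2/d \<in> gS V x" using d by (simp add: gS_def)
  then show ?thesis by auto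
qed

lemma bdd: "bdd_below (gS V x)"
  unfolding gS_def by (rule bdd_belowI[of _ 0]) auto

lemma gauge_nonneg: "0 \<le> gauge V x"
  unfolding gauge_def using absorb by (rule cInf_greatest) (auto simp: gS_def)

lemma gS_up: assumes "t \<in> gS V x" "t \<le> t'" shows "t' \<in> gS V x"
proof -
  have t: "0 < t" "sc (of_real (inverse t)) x \<in> V" using assms by (auto simp: gS_def)
  have "sc (of_real (t/t')) (sc (of_real (inverse t)) x) + sc (of_real (1 - t/t')) 0 \<in> V"
    using t V0 assms(2) by (intro conv) auto
  moreover have "sc (of_real (t/t')) (sc (of_real (inverse t)) x) + sc (of_real (1 - t/t')) 0
     = sc (of_real (inverse t')) x"
    using t by (simp add: field_simps)
  ultimately have "sc (of_real (inverse t')) x \<in> V" by metis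
  then show ?thesis using t assms(2) by (simp add: gS_def)
qed

lemma gS_add: assumes "t \<in> gS V x" "s \<in> gS V y" shows "t + s \<in> gS V (x + y)"
proof -
  have t: "0 < t" "sc (of_real (inverse t)) x \<in> V" "0 < s" "sc (of_real (inverse s)) y \<in> V"
    using assms by (auto simp: gS_def)
  have "sc (of_real (t/(t+s))) (sc (of_real (inverse t)) x) + sc (of_real (1 - t/(t+s))) (sc (of_real (inverse s)) y) \<in> V"
    using t by (intro conv) auto
  moreover have "sc (of_real (t/(t+s))) (sc (of_real (inverse t)) x) + sc (of_real (1 - t/(t+s))) (sc (of_real (inverse s)) y)
     = sc (of_real (inverse (t+s))) (x + y)"
  proof -
    have "1 - t/(t+s) = s/(t+s)" using t by (simp add: field_simps)
    then show ?thesis using t by (simp add: V.scale_right_distrib field_simps)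
  qed
  ultimately show ?thesis using t by (simp add: gS_def)
qed

lemma gS_scale: assumes "t \<in> gS V x" "0 < r" shows "r * t \<in> gS V (sc (of_real r) x)"
  using assms by (auto simp: gS_def field_simps)

lemma gauge_scale_le: assumes "0 < r" shows "gauge V (sc (of_real r) x) \<le> r * gauge V x"
proof -
  have "gauge V (sc (of_real r) x) / r \<le> gauge V x"
    unfolding gauge_def[of V x]
  proof (rule cInf_greatest[OF absorb])
    fix t assume "t \<in> gS V x"
    then have "gauge V (sc (of_real r) x) \<le> r * t"
      unfolding gauge_def using gS_scale assms bdd by (meson cInf_lower)
    then show "gauge V (sc (of_real r) x) / r \<le> t" using assms by (simp add: field_simps)
  qed
  then show ?thesis using assms by (simp add: field_simps)
qed

lemma gauge_scale: assumes "0 < r" shows "gauge V (sc (of_real r) x) = r * gauge V x"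
proof -
  have "gauge V x = gauge V (sc (of_real (inverse r)) (sc (of_real r) x))"
    using assms by simp
  also have "\<dots> \<le> inverse r * gauge V (sc (of_real r) x)"
    using assms by (intro gauge_scale_le) auto
  finally have "r * gauge V x \<le> gauge V (sc (of_real r) x)" using assms by (simp add: field_simps)
  with gauge_scale_le[OF assms, of x] show ?thesis by linarith
qed

lemma gauge_zero: "gauge V 0 = 0"
  using gauge_scale[of 2 0] by simp

lemma gauge_add: "gauge V (x + y) \<le> gauge V x + gauge V y"
proof -
  have "gauge V (x + y) - gauge V x \<le> s" if s: "s \<in> gS V y" for s
  proof -
    have "gauge V (x + y) - s \<le> gauge V x"
      unfolding gauge_def[of V x]
    proof (rule cInf_greatest[OF absorb])
      fix t assume "t \<in> gS V x"
      then have "gauge V (x + y) \<le> t + s" unfolding gauge_def using gS_add s bdd by (meson cInf_lower)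
      then show "gauge V (x + y) - s \<le> t" by simp
    qed
    then show ?thesis by simp
  qed
  then have "gauge V (x + y) - gauge V x \<le> gauge V y"
    unfolding gauge_def[of V y] by (intro cInf_greatest[OF absorb])
  then show ?thesis by simp
qed

lemma gauge_le1: "x \<in> V \<Longrightarrow> gauge V x \<le> 1"
  unfolding gauge_def by (rule cInf_lower[OF _ bdd]) (simp add: gS_def)

lemma gauge_ge1: assumes "x \<notin> V" shows "1 \<le> gauge V x"
proof (rule ccontr)
  assume "\<not> 1 \<le> gauge V x"
  then obtain t where "t \<in> gS V x" "t < 1" unfolding gauge_def using absorb
    by (metis cInf_lessD not_le)
  then have "1 \<in> gS V x" using gS_up by auto
  then show False using assms by (simp add: gS_def)
qed

end
end

context lcx begin

definition good :: "('x \<Rightarrow> real) \<Rightarrow> ('x \<times> real) set \<Rightarrow> bool" where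
  "good p G \<longleftrightarrow> (\<forall>x a y b. (x,a)\<in>G \<longrightarrow> (y,b)\<in>G \<longrightarrow> (x+y,a+b)\<in>G)
     \<and> (\<forall>x a r. (x,a)\<in>G \<longrightarrow> (sc (of_real r) x, r*a)\<in>G) \<and> (\<forall>x a. (x,a)\<in>G \<longrightarrow> a \<le> p x)"

context
  fixes p :: "'x \<Rightarrow> real"
  assumes padd: "\<And>x y. p (x + y) \<le> p x + p y"
    and pscale: "\<And>r x. 0 < r \<Longrightarrow> p (sc (of_real r) x) = r * p x"
begin

lemma p0: "p 0 = 0"
  using pscale[of 2 0] by simp

lemma goodD:
  assumes "good p G"
  shows "(x,a)\<in>G \<Longrightarrow> (y,b)\<in>G \<Longrightarrow> (x+y,a+b)\<in>G"
    and "(x,a)\<in>G \<Longrightarrow> (sc (of_real r) x, r*a)\<in>G"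
    and "(x,a)\<in>G \<Longrightarrow> a \<le> p x"
  using assms unfolding good_def by blast+

lemma good_unique:
  assumes g: "good p G" and xa: "(x,a)\<in>G" and xb: "(x,b)\<in>G"
  shows "a = b"
proof -
  have "\<And>a b. (x,a)\<in>G \<Longrightarrow> (x,b)\<in>G \<Longrightarrow> a - b \<le> 0"
  proof -
    fix a b assume xa: "(x,a)\<in>G" and xb: "(x,b)\<in>G"
    have "(sc (of_real (-1)) x, (-1)*b) \<in> G" by (rule goodD(2)[OF g xb])
    from goodD(1)[OF g xa this] have "(0, a - b) \<in> G" by simp
    from goodD(3)[OF g this] show "a - b \<le> 0" by (simp add: p0)
  qed
  from this[OF xa xb] this[OF xb xa] show ?thesis by simp
qed

lemma good_ext:
  assumes g: "good p G" and G0: "(0,0) \<in> G" and nz: "\<not>(\<exists>a. (z,a)\<in>G)"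
  shows "\<exists>G'. good p G' \<and> G \<subseteq> G' \<and> G' \<noteq> G"
proof -
  define C where "C = {a - p (x - z) | x a. (x,a) \<in> G}"
  define c where "c = Sup C"
  have bound: "b - p (w - z) \<le> p (x' + z) - a'" if "(w,b) \<in> G" "(x',a') \<in> G" for w b x' a'
  proof -
    have "(w + x', b + a') \<in> G" by (rule goodD(1)[OF g that])
    then have "b + a' \<le> p (w + x')" by (rule goodD(3)[OF g])
    also have "w + x' = (w - z) + (x' + z)" by simp
    finally show ?thesis using padd[of "w - z" "x' + z"] by simp
  qed
  have Cne: "C \<noteq> {}" using G0 unfolding C_def by blast
  have Cbdd: "bdd_above C" unfolding C_def
    by (rule bdd_aboveI[of _ "p (0 + z) - 0"]) (use bound G0 in blast)
  have cup: "a - p (x - z) \<le> c" if "(x,a) \<in> G" for x a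
    unfolding c_def by (rule cSup_upper[OF _ Cbdd]) (use that C_def in blast)
  have clo: "c \<le> p (x' + z) - a'" if "(x',a') \<in> G" for x' a'
    unfolding c_def by (rule cSup_least[OF Cne]) (use that bound C_def in blast)
  define G' where "G' = {(x + sc (of_real r) z, a + r*c) | x a r. (x,a) \<in> G}"
  have "good p G'"
    unfolding good_def
  proof (intro conjI allI impI)
    fix x a y b assume "(x,a) \<in> G'" "(y,b) \<in> G'"
    then obtain x1 a1 r1 x2 a2 r2 where h: "(x1,a1)\<in>G" "(x2,a2)\<in>G"
      "x = x1 + sc (of_real r1) z" "a = a1 + r1*c" "y = x2 + sc (of_real r2) z" "b = a2 + r2*c"
      unfolding G'_def by blast
    have "(x1+x2, a1+a2) \<in> G" by (rule goodD(1)[OF g h(1,2)])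
    moreover have "x + y = (x1+x2) + sc (of_real (r1+r2)) z"
      using h by (simp add: V.scale_left_distrib algebra_simps)
    moreover have "a + b = (a1+a2) + (r1+r2)*c" using h by (simp add: algebra_simps)
    ultimately show "(x+y, a+b) \<in> G'" unfolding G'_def by blast
  next
    fix x a t assume "(x,a) \<in> G'"
    then obtain x1 a1 r1 where h: "(x1,a1)\<in>G" "x = x1 + sc (of_real r1) z" "a = a1 + r1*c"
      unfolding G'_def by blast
    have "(sc (of_real t) x1, t*a1) \<in> G" by (rule goodD(2)[OF g h(1)])
    moreover have "sc (of_real t) x = sc (of_real t) x1 + sc (of_real (t*r1)) z"
      using h by (simp add: V.scale_right_distrib)
    moreover have "t * a = t*a1 + (t*r1)*c" using h by (simp add: algebra_simps)
    ultimately show "(sc (of_real t) x, t*a) \<in> G'" unfolding G'_def by blast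
  next
    fix x a assume "(x,a) \<in> G'"
    then obtain x1 a1 r where h: "(x1,a1)\<in>G" "x = x1 + sc (of_real r) z" "a = a1 + r*c"
      unfolding G'_def by blast
    show "a \<le> p x"
    proof (cases r "0::real" rule: linorder_cases)
      case equal
      then show ?thesis using h goodD(3)[OF g h(1)] by simp
    next
      case greater
      define x' where "x' = sc (of_real (1/r)) x1"
      have x'G: "(x', (1/r)*a1) \<in> G" unfolding x'_def by (rule goodD(2)[OF g h(1)])
      have "c \<le> p (x' + z) - (1/r)*a1" by (rule clo[OF x'G])
      then have "r * c \<le> r * p (x' + z) - a1" using greater
        by (simp add: field_simps)
      also have "r * p (x' + z) = p (sc (of_real r) (x' + z))" using pscale greater by simp
      also have "sc (of_real r) (x' + z) = x" using h greater
        by (simp add: x'_def V.scale_right_distrib)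
      finally show ?thesis using h by simp
    next
      case less
      define s where "s = - r"
      have s: "0 < s" using less s_def by simp
      define x' where "x' = sc (of_real (1/s)) x1"
      have x'G: "(x', (1/s)*a1) \<in> G" unfolding x'_def by (rule goodD(2)[OF g h(1)])
      have "(1/s)*a1 - p (x' - z) \<le> c" by (rule cup[OF x'G])
      then have "a1 + r * c \<le> s * p (x' - z)" using s unfolding s_def
        by (simp add: field_simps)
      also have "s * p (x' - z) = p (sc (of_real s) (x' - z))" using pscale s by simp
      also have "sc (of_real s) (x' - z) = x" using h s
        by (simp add: x'_def V.scale_right_diff_distrib s_def)
      finally show ?thesis using h by simp
    qed
  qed
  moreover have "G \<subseteq> G'"
  proof
    fix xa assume "xa \<in> G"
    then obtain x a where "xa = (x,a)" "(x,a) \<in> G" by (cases xa) auto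
    moreover have "xa = (x + sc (of_real 0) z, a + 0*c)" using \<open>xa = (x,a)\<close> by simp
    ultimately show "xa \<in> G'" unfolding G'_def by blast
  qed
  moreover have "(z, c) = (0 + sc (of_real 1) z, 0 + 1*c)" by simp
  then have "(z, c) \<in> G'" unfolding G'_def using G0 by blast
  ultimately show ?thesis using nz by blast
qed

lemma hb:
  assumes g0: "good p G0" and ne: "G0 \<noteq> {}"
  shows "\<exists>u. (\<forall>x y. u (x+y) = u x + u y) \<and> (\<forall>r x. u (sc (of_real r) x) = r * u x)
     \<and> (\<forall>x. u x \<le> p x) \<and> (\<forall>x a. (x,a)\<in>G0 \<longrightarrow> u x = a)"
proof -
  define A where "A = {G. good p G \<and> G0 \<subseteq> G}"
  have "\<exists>M\<in>A. \<forall>X\<in>A. M \<subseteq> X \<longrightarrow> X = M"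
  proof (rule Zorn_Lemma2, intro ballI)
    fix Ch assume Ch: "Ch \<in> chains A"
    show "\<exists>U\<in>A. \<forall>X\<in>Ch. X \<subseteq> U"
    proof (cases "Ch = {}")
      case True
      then show ?thesis using g0 A_def by auto
    next
      case False
      have sub: "Ch \<subseteq> A" and ch: "\<And>X Y. X \<in> Ch \<Longrightarrow> Y \<in> Ch \<Longrightarrow> X \<subseteq> Y \<or> Y \<subseteq> X"
        using Ch unfolding chains_def chain_subset_def by auto
      have "good p (\<Union>Ch)" unfolding good_def
      proof (intro conjI allI impI)
        fix x a y b assume "(x,a) \<in> \<Union>Ch" "(y,b) \<in> \<Union>Ch"
        then obtain X Y where XY: "X \<in> Ch" "Y \<in> Ch" "(x,a) \<in> X" "(y,b) \<in> Y" by blast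
        then have gX: "good p X" "good p Y" using sub A_def by auto
        from ch[OF XY(1,2)] show "(x+y,a+b) \<in> \<Union>Ch"
        proof
          assume "X \<subseteq> Y" then show ?thesis using goodD(1)[OF gX(2)] XY by blast
        next
          assume "Y \<subseteq> X" then show ?thesis using goodD(1)[OF gX(1)] XY by blast
        qed
      next
        fix x a r assume "(x,a) \<in> \<Union>Ch"
        then obtain X where "X \<in> Ch" "(x,a) \<in> X" by blast
        then show "(sc (of_real r) x, r*a) \<in> \<Union>Ch" using goodD(2) sub A_def by blast
      next
        fix x a assume "(x,a) \<in> \<Union>Ch"
        then obtain X where "X \<in> Ch" "(x,a) \<in> X" by blast
        then show "a \<le> p x" using goodD(3) sub A_def by blast
      qed
      moreover have "G0 \<subseteq> \<Union>Ch" using False sub A_def by auto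
      ultimately show ?thesis unfolding A_def by blast
    qed
  qed
  then obtain M where MA: "M \<in> A" and max: "\<And>X. X \<in> A \<Longrightarrow> M \<subseteq> X \<Longrightarrow> X = M" by blast
  have gM: "good p M" and G0M: "G0 \<subseteq> M" using MA A_def by auto
  obtain x0 a0 where "(x0,a0) \<in> G0" using ne by auto
  then have "(sc (of_real 0) x0, 0*a0) \<in> M" using goodD(2)[OF gM] G0M by blast
  then have M0: "(0,0) \<in> M" by simp
  have tot: "\<exists>a. (z,a) \<in> M" for z
  proof (rule ccontr)
    assume "\<not> (\<exists>a. (z,a) \<in> M)"
    from good_ext[OF gM M0 this] obtain G' where "good p G'" "M \<subseteq> G'" "G' \<noteq> M" by blast
    moreover then have "G' \<in> A" using G0M A_def by auto
    ultimately show False using max by blast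
  qed
  define u where "u z = (THE a. (z,a) \<in> M)" for z
  have uM: "(z, u z) \<in> M" for z
  proof -
    obtain a where a: "(z,a) \<in> M" using tot by blast
    have "(THE a. (z,a) \<in> M) = a" by (rule the_equality[of "\<lambda>a. (z,a)\<in>M" a, OF a]) (use good_unique[OF gM a] in auto)
    then show ?thesis using a u_def by simp
  qed
  have ueq: "(z,a) \<in> M \<Longrightarrow> u z = a" for z a using good_unique[OF gM uM] by blast
  show ?thesis
  proof (intro exI[of _ u] conjI allI impI)
    fix x y show "u (x+y) = u x + u y" using goodD(1)[OF gM uM uM] ueq by blast
  next
    fix r x show "u (sc (of_real r) x) = r * u x" using goodD(2)[OF gM uM] ueq by blast
  next
    fix x show "u x \<le> p x" using goodD(3)[OF gM uM] .
  next
    fix x a assume "(x,a) \<in> G0" then show "u x = a" using G0M ueq by blast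
  qed
qed

end
end

context lcx begin

lemma cont_diff_const: "continuous_on UNIV (\<lambda>x. x - (x0::'x))"
proof -
  have "continuous_on UNIV (\<lambda>x. x + (- x0))"
    by (rule cont_add) (auto intro: continuous_on_id continuous_on_const)
  then show ?thesis by simp
qed

lemma sep:
  assumes y: "y \<noteq> 0"
  shows "\<exists>\<phi>. continuous_on UNIV \<phi> \<and> (\<forall>x z. \<phi> (x+z) = \<phi> x + \<phi> z)
     \<and> (\<forall>c x. \<phi> (sc c x) = c * \<phi> x) \<and> \<phi> y \<noteq> 0"
proof -
  obtain U where U: "open U" "0 \<in> U" "y \<notin> U" using t1_space[of 0 y] y by metis
  obtain V where V: "open V" "0 \<in> V" "V \<subseteq> U" "convex_wrt sc V"
    using lc U unfolding lc_tvs_def by blast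
  define p where "p = gauge V"
  have padd: "\<And>x y. p (x + y) \<le> p x + p y" unfolding p_def by (rule gauge_add[OF V(1,2,4)])
  have pscale: "\<And>r x. 0 < r \<Longrightarrow> p (sc (of_real r) x) = r * p x"
    unfolding p_def by (rule gauge_scale[OF V(1,2,4)])
  have pnn: "\<And>x. 0 \<le> p x" unfolding p_def by (rule gauge_nonneg[OF V(1,2,4)])
  have pV: "\<And>x. x \<in> V \<Longrightarrow> p x \<le> 1" unfolding p_def by (rule gauge_le1[OF V(1,2,4)])
  have py: "1 \<le> p y" unfolding p_def by (rule gauge_ge1[OF V(1,2,4)]) (use U V in blast)
  define G0 where "G0 = {(sc (of_real r) y, r * p y) | r. True}"
  have "good p G0" unfolding good_def
  proof (intro conjI allI impI)
    fix x a z b assume "(x,a) \<in> G0" "(z,b) \<in> G0"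
    then obtain r s where "x = sc (of_real r) y" "a = r * p y" "z = sc (of_real s) y" "b = s * p y"
      unfolding G0_def by blast
    then have "(x+z, a+b) = (sc (of_real (r+s)) y, (r+s) * p y)"
      by (simp add: V.scale_left_distrib algebra_simps)
    then show "(x+z, a+b) \<in> G0" unfolding G0_def by blast
  next
    fix x a t assume "(x,a) \<in> G0"
    then obtain r where "x = sc (of_real r) y" "a = r * p y" unfolding G0_def by blast
    then have "(sc (of_real t) x, t*a) = (sc (of_real (t*r)) y, (t*r) * p y)" by simp
    then show "(sc (of_real t) x, t*a) \<in> G0" unfolding G0_def by blast
  next
    fix x a assume "(x,a) \<in> G0"
    then obtain r where r: "x = sc (of_real r) y" "a = r * p y" unfolding G0_def by blast
    show "a \<le> p x"
    proof (cases "0 < r")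
      case True then show ?thesis using r pscale by simp
    next
      case False
      then have "r * p y \<le> 0" using pnn[of y] by (simp add: mult_nonpos_nonneg)
      then show ?thesis using r pnn[of x] by simp
    qed
  qed
  moreover have "G0 \<noteq> {}" unfolding G0_def by blast
  ultimately obtain u where uadd: "\<And>x z. u (x+z) = u x + u z"
    and uscale: "\<And>r x. u (sc (of_real r) x) = r * u x"
    and up: "\<And>x. u x \<le> p x" and uG0: "\<And>x a. (x,a)\<in>G0 \<Longrightarrow> u x = a"
    using hb[of p, OF padd pscale] by blast
  have "(y, 1 * p y) \<in> G0" unfolding G0_def
    by (rule CollectI, rule exI[of _ 1]) simp
  then have uy: "u y = p y" using uG0 by simp
  have udiff: "u (x - w) = u x - u w" for x w
    using uadd[of "x - w" w] by simp
  have ucont: "continuous_on UNIV u"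
    unfolding continuous_on_topological
  proof (intro ballI allI impI)
    fix x0 :: 'x and B :: "real set"
    assume "open B" "u x0 \<in> B"
    then obtain e where e: "e > 0" "ball (u x0) e \<subseteq> B" by (meson openE)
    define k where "k = 2 / e"
    have k: "k > 0" using e k_def by simp
    define A where "A = (\<lambda>x. sc (of_real k) (x - x0)) -` V \<inter> (\<lambda>x. sc (of_real (-k)) (x - x0)) -` V"
    have "open A" unfolding A_def
      by (intro open_Int open_vimage[OF V(1)] cont_sc continuous_on_const cont_diff_const)
    moreover have "x0 \<in> A" unfolding A_def using V(2) by simp
    moreover have "u x \<in> B" if "x \<in> A" for x
    proof -
      have "k * u (x - x0) \<le> 1" using that up pV uscale unfolding A_def
        by (metis IntD1 order.trans vimageE)
      moreover have "(-k) * u (x - x0) \<le> 1" using that up pV uscale unfolding A_def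
        by (metis IntD2 order.trans vimageE)
      ultimately have "\<bar>u (x - x0)\<bar> \<le> 1 / k" using k by (simp add: field_simps abs_le_iff)
      also have "1 / k < e" using e k_def by simp
      finally have "dist (u x0) (u x) < e" using udiff by (simp add: dist_real_def abs_minus_commute)
      then show ?thesis using e by auto
    qed
    ultimately show "\<exists>A. open A \<and> x0 \<in> A \<and> (\<forall>x\<in>UNIV. x \<in> A \<longrightarrow> u x \<in> B)" by blast
  qed
  define \<phi> where "\<phi> x = complex_of_real (u x) - \<i> * complex_of_real (u (sc \<i> x))" for x
  have usc: "u (sc c x) = Re c * u x + Im c * u (sc \<i> x)" for c x
  proof -
    have "complex_of_real (Re c) + complex_of_real (Im c) * \<i> = c" by (simp add: complex_eq_iff)
    then have "sc c x = sc (of_real (Re c)) x + sc (of_real (Im c)) (sc \<i> x)"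
      by (metis V.scale_left_distrib V.scale_scale)
    then have "u (sc c x) = u (sc (of_real (Re c)) x) + u (sc (of_real (Im c)) (sc \<i> x))"
      by (metis uadd)
    then show ?thesis by (simp only: uscale)
  qed
  have "continuous_on UNIV \<phi>"
  proof -
    have "continuous_on UNIV (\<lambda>x. u (sc \<i> x))"
      by (rule continuous_on_compose2[OF ucont]) (auto intro: cont_sc continuous_on_const continuous_on_id)
    then show ?thesis unfolding \<phi>_def
      by (intro continuous_intros ucont) auto
  qed
  moreover have "\<forall>x z. \<phi> (x+z) = \<phi> x + \<phi> z"
    by (simp add: \<phi>_def uadd V.scale_right_distrib algebra_simps)
  moreover have "\<forall>c x. \<phi> (sc c x) = c * \<phi> x"
  proof (intro allI)
    fix c x
    have "u (sc \<i> (sc c x)) = - Im c * u x + Re c * u (sc \<i> x)"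
      using usc[of "\<i> * c" x] by simp
    then show "\<phi> (sc c x) = c * \<phi> x" unfolding \<phi>_def usc[of c x]
      by (simp add: complex_eq_iff algebra_simps)
  qed
  moreover have "\<phi> y \<noteq> 0"
  proof -
    have "Re (\<phi> y) = u y" unfolding \<phi>_def by simp
    then show ?thesis using uy py by auto
  qed
  ultimately show ?thesis by blast
qed

end

lemma fscale_module: "module (fscale :: complex \<Rightarrow> ('j \<Rightarrow> complex) \<Rightarrow> _)"
  by unfold_locales (auto simp: fscale_def fun_eq_iff algebra_simps)

definition subsp :: "('j \<Rightarrow> complex) set \<Rightarrow> bool" where
  "subsp P \<longleftrightarrow> (\<forall>f\<in>P. \<forall>g\<in>P. \<forall>a b. (\<lambda>x. a * f x + b * g x) \<in> P) \<and> (\<lambda>x. 0) \<in> P"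

lemma subsp_lin2: "subsp P \<Longrightarrow> f \<in> P \<Longrightarrow> g \<in> P \<Longrightarrow> (\<lambda>x. a * f x + b * g x) \<in> P"
  unfolding subsp_def by blast

lemma subsp_sum: "subsp P \<Longrightarrow> (\<And>i. i < (l::nat) \<Longrightarrow> q i \<in> P) \<Longrightarrow> (\<lambda>x. \<Sum>i<l. c i * q i x) \<in> P"
proof (induction l)
  case 0 then show ?case by (simp add: subsp_def)
next
  case (Suc l)
  then have "(\<lambda>x. 1 * (\<Sum>i<l. c i * q i x) + c l * q l x) \<in> P"
    by (intro subsp_lin2) auto
  then show ?case by simp
qed

lemma sum_fun: "(\<Sum>i<(l::nat). fscale (c i) (q i)) = (\<lambda>x. \<Sum>i<l. c i * q i x)"
  by (induction l) (auto simp: fscale_def fun_eq_iff)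

lemma interp:
  fixes B :: "('j \<Rightarrow> complex) set"
  assumes "finite B" "subsp P" "P \<subseteq> module.span fscale B"
  shows "\<exists>(l::nat) q j. (\<forall>i<l. q i \<in> P) \<and> (\<forall>f\<in>P. \<forall>x. f x = (\<Sum>i<l. f (j i) * q i x))"
  using assms
proof (induction B arbitrary: P rule: finite_induct)
  interpret M: module "fscale :: complex \<Rightarrow> ('j \<Rightarrow> complex) \<Rightarrow> _" by (rule fscale_module)
  case empty
  then have "\<forall>f\<in>P. \<forall>x. f x = 0" by (auto simp: fun_eq_iff)
  then show ?case by (rule_tac x=0 in exI) auto
next
  interpret M: module "fscale :: complex \<Rightarrow> ('j \<Rightarrow> complex) \<Rightarrow> _" by (rule fscale_module)
  case (insert b B')
  define P' where "P' = P \<inter> M.span B'"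
  have "subsp P'" unfolding subsp_def P'_def
  proof (intro conjI ballI allI)
    fix f g a c assume f: "f \<in> P \<inter> M.span B'" and g: "g \<in> P \<inter> M.span B'"
    have "fscale a f + fscale c g \<in> M.span B'" using f g by (intro M.span_add M.span_scale) auto
    moreover have "fscale a f + fscale c g = (\<lambda>x. a * f x + c * g x)" by (simp add: fscale_def fun_eq_iff)
    ultimately show "(\<lambda>x. a * f x + c * g x) \<in> P \<inter> M.span B'"
      using subsp_lin2[OF insert(4)] f g by auto
  next
    have "(\<lambda>x. 0::complex) = 0" by (simp add: fun_eq_iff)
    then have "(\<lambda>x. 0::complex) \<in> M.span B'" using M.span_zero by metis
    then show "(\<lambda>x. 0) \<in> P \<inter> M.span B'" using insert(4) unfolding subsp_def by auto
  qed
  moreover have "P' \<subseteq> M.span B'" unfolding P'_def by blast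
  ultimately obtain l' q' j' where q'P: "\<forall>i<(l'::nat). q' i \<in> P'"
    and rep': "\<forall>f\<in>P'. \<forall>x. f x = (\<Sum>i<l'. f (j' i) * q' i x)"
    using insert.IH[of P'] by blast
  show ?case
  proof (cases "P \<subseteq> M.span B'")
    case True
    then have "P' = P" unfolding P'_def by auto
    then show ?thesis using q'P rep' by blast
  next
    case False
    then obtain g where gP: "g \<in> P" and gn: "g \<notin> M.span B'" by blast
    define T where "T f x = f x - (\<Sum>i<l'. f (j' i) * q' i x)" for f x
    obtain kg where kg: "g - fscale kg b \<in> M.span B'"
      using gP insert(5) M.span_breakdown_eq by blast
    have kg0: "kg \<noteq> 0" using kg gn by (auto simp: M.scale_zero_left)
    define gt where "gt = T g"
    have q'P2: "q' i \<in> P" if "i < l'" for i using q'P that P'_def by auto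
    have gtP: "gt \<in> P"
    proof -
      have "(\<lambda>x. \<Sum>i<l'. g (j' i) * q' i x) \<in> P" by (rule subsp_sum[OF insert(4) q'P2])
      from subsp_lin2[OF insert(4) gP this, of 1 "-1"]
      have "(\<lambda>x. 1 * g x + (-1) * (\<Sum>i<l'. g (j' i) * q' i x)) \<in> P" .
      moreover have "(\<lambda>x. 1 * g x + (-1) * (\<Sum>i<l'. g (j' i) * q' i x)) = gt"
        unfolding gt_def by (rule ext) (simp add: T_def)
      ultimately show ?thesis by metis
    qed
    have "\<exists>j0. gt j0 \<noteq> 0"
    proof (rule ccontr)
      assume "\<not> (\<exists>j0. gt j0 \<noteq> 0)"
      then have z: "T g x = 0" for x unfolding gt_def by blast
      have "g = (\<lambda>x. \<Sum>i<l'. g (j' i) * q' i x)"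
      proof (rule ext)
        fix x show "g x = (\<Sum>i<l'. g (j' i) * q' i x)" using z[of x] unfolding T_def by simp
      qed
      also have "\<dots> = (\<Sum>i<l'. fscale (g (j' i)) (q' i))" by (rule sum_fun[symmetric])
      also have "\<dots> \<in> M.span B'"
        by (intro M.span_sum M.span_scale) (use q'P P'_def in blast)
      finally show False using gn by blast
    qed
    then obtain j0 where j0: "gt j0 \<noteq> 0" by blast
    have key: "T f x = (T f j0 / gt j0) * gt x" if fP: "f \<in> P" for f x
    proof -
      obtain k where k: "f - fscale k b \<in> M.span B'"
        using fP insert(5) M.span_breakdown_eq by blast
      define a where "a = k / kg"
      define h where "h = (\<lambda>x. 1 * f x + (-a) * g x)"
      have "h = (f - fscale k b) - fscale a (g - fscale kg b)"
        using kg0 by (simp add: h_def a_def fscale_def fun_eq_iff algebra_simps)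
      also have "\<dots> \<in> M.span B'" by (rule M.span_diff[OF k M.span_scale[OF kg]])
      moreover have "h \<in> P" unfolding h_def by (rule subsp_lin2[OF insert(4) fP gP])
      ultimately have "h \<in> P'" unfolding P'_def by blast
      then have hrep: "\<And>x. h x = (\<Sum>i<l'. h (j' i) * q' i x)" using rep' by blast
      have Ta: "T f y = a * gt y" for y
      proof -
        have fh: "\<And>z. f z = h z + a * g z" by (simp add: h_def)
        have "T f y = h y + a * g y - (\<Sum>i<l'. (h (j' i) + a * g (j' i)) * q' i y)"
          unfolding T_def by (simp add: fh)
        also have "\<dots> = a * gt y" unfolding gt_def T_def
          by (subst hrep[of y]) (simp add: distrib_right sum.distrib sum_distrib_left algebra_simps)
        finally show ?thesis .
      qed
      show ?thesis using Ta[of j0] Ta[of x] j0 by simp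
    qed
    define qn where "qn i = (if i < l' then (\<lambda>x. q' i x - q' i j0 / gt j0 * gt x) else (\<lambda>x. gt x / gt j0))" for i
    define jn where "jn i = (if i < l' then j' i else j0)" for i
    show ?thesis
    proof (intro exI[of _ "Suc l'"] exI[of _ qn] exI[of _ jn] conjI allI impI ballI)
      fix i assume "i < Suc l'"
      show "qn i \<in> P"
      proof (cases "i < l'")
        case True
        from subsp_lin2[OF insert(4) q'P2[OF True] gtP, of 1 "- (q' i j0 / gt j0)"]
        show ?thesis using True by (simp add: qn_def)
      next
        case False
        from subsp_lin2[OF insert(4) gtP gtP, of "1 / gt j0" 0]
        show ?thesis using False by (simp add: qn_def)
      qed
    next
      fix f x assume fP: "f \<in> P"
      have "(\<Sum>i<Suc l'. f (jn i) * qn i x)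
          = (\<Sum>i<l'. f (j' i) * (q' i x - q' i j0 / gt j0 * gt x)) + f j0 * (gt x / gt j0)"
        by (simp add: jn_def qn_def)
      also have "\<dots> = (\<Sum>i<l'. f (j' i) * q' i x) + (f j0 - (\<Sum>i<l'. f (j' i) * q' i j0)) / gt j0 * gt x"
      proof -
        have "(\<Sum>i<l'. f (j' i) * (q' i x - q' i j0 / gt j0 * gt x))
          = (\<Sum>i<l'. f (j' i) * q' i x) - (\<Sum>i<l'. f (j' i) * q' i j0 * (gt x / gt j0))"
          by (simp add: right_diff_distrib sum_subtractf mult.assoc)
        also have "(\<Sum>i<l'. f (j' i) * q' i j0 * (gt x / gt j0)) = (\<Sum>i<l'. f (j' i) * q' i j0) * (gt x / gt j0)"
          by (simp only: sum_distrib_right)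
        finally have e: "(\<Sum>i<l'. f (j' i) * (q' i x - q' i j0 / gt j0 * gt x))
          = (\<Sum>i<l'. f (j' i) * q' i x) - (\<Sum>i<l'. f (j' i) * q' i j0) * (gt x / gt j0)" .
        show ?thesis unfolding e using j0 by (simp add: field_simps)
      qed
      also have "\<dots> = (\<Sum>i<l'. f (j' i) * q' i x) + T f x"
        using key[OF fP, of x] by (simp add: T_def)
      also have "\<dots> = f x" by (simp add: T_def)
      finally show "f x = (\<Sum>i<Suc l'. f (jn i) * qn i x)" by simp
    qed
  qed
qed


lemma Pn_subsp: "subsp (Pn (*) n :: ('j::{ab_semigroup_add,topological_space} \<Rightarrow> complex) set)"
  unfolding subsp_def
proof (intro conjI ballI allI)
  fix f g :: "'j \<Rightarrow> complex" and a b :: complex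
  assume f: "f \<in> Pn (*) n" and g: "g \<in> Pn (*) n"
  show "(\<lambda>x. a * f x + b * g x) \<in> Pn (*) n"
    unfolding Pn_def
  proof (intro CollectI conjI allI)
    show "continuous_on UNIV (\<lambda>x. a * f x + b * g x)"
      using f g unfolding Pn_def by (auto intro!: continuous_intros)
  next
    fix s t
    obtain cf where cf: "\<And>m. f (smul_shift s m t) = (\<Sum>k\<le>n. of_nat m ^ k * cf k)"
      using f unfolding Pn_def by blast
    obtain cg where cg: "\<And>m. g (smul_shift s m t) = (\<Sum>k\<le>n. of_nat m ^ k * cg k)"
      using g unfolding Pn_def by blast
    show "\<exists>c. \<forall>m. a * f (smul_shift s m t) + b * g (smul_shift s m t) = (\<Sum>k\<le>n. of_nat m ^ k * c k)"
      by (rule exI[of _ "\<lambda>k. a * cf k + b * cg k"])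
         (simp add: cf cg sum_distrib_left sum.distrib algebra_simps)
  qed
next
  show "(\<lambda>x. 0) \<in> (Pn (*) n :: ('j \<Rightarrow> complex) set)"
    unfolding Pn_def by (auto intro!: exI[of _ "\<lambda>k. 0"] continuous_on_const)
qed

theorem lemma3p1:
  fixes sc :: "complex \<Rightarrow> 'x::{ab_group_add,t2_space} \<Rightarrow> 'x"
    and n :: nat
  assumes "ab_top_semigroup TYPE('j::{ab_semigroup_add,topological_space})"
    and "lc_tvs sc"
    and "\<exists>B. finite B \<and> (Pn (*) n :: ('j \<Rightarrow> complex) set) \<subseteq> module.span fscale B"
  shows "(Pn sc n :: ('j \<Rightarrow> 'x) set) =
    {(\<lambda>j. \<Sum>i<l. sc (q i j) (x i)) | (l::nat) q x. \<forall>i<l. q i \<in> (Pn (*) n :: ('j \<Rightarrow> complex) set)}"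
proof -
  interpret L: lcx sc by unfold_locales (rule assms(2))
  define P where "P = (Pn (*) n :: ('j \<Rightarrow> complex) set)"
  obtain B where B: "finite B" "P \<subseteq> module.span fscale B" using assms(3) P_def by blast
  obtain l :: nat and q jj where qP: "\<forall>i<l. q i \<in> P"
    and rep: "\<forall>f\<in>P. \<forall>x. f x = (\<Sum>i<l. f (jj i) * q i x)"
    using interp[OF B(1) _ B(2)] Pn_subsp P_def by blast
  show ?thesis
  proof (intro equalityI subsetI)
    fix p :: "'j \<Rightarrow> 'x" assume pP: "p \<in> Pn sc n"
    have "p = (\<lambda>y. \<Sum>i<l. sc (q i y) (p (jj i)))"
    proof (rule ext, rule ccontr)
      fix y assume ne: "p y \<noteq> (\<Sum>i<l. sc (q i y) (p (jj i)))"
      then have "p y - (\<Sum>i<l. sc (q i y) (p (jj i))) \<noteq> 0" by simp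
      from L.sep[OF this] obtain \<phi> where phc: "continuous_on UNIV \<phi>"
        and phadd: "\<And>x z. \<phi> (x+z) = \<phi> x + \<phi> z" and phsc: "\<And>c x. \<phi> (sc c x) = c * \<phi> x"
        and phne: "\<phi> (p y - (\<Sum>i<l. sc (q i y) (p (jj i)))) \<noteq> 0" by blast
      interpret Ad: additive \<phi> by unfold_locales (rule phadd)
      have "(\<lambda>j. \<phi> (p j)) \<in> P" unfolding P_def Pn_def
      proof (intro CollectI conjI allI)
        show "continuous_on UNIV (\<lambda>j. \<phi> (p j))"
          by (rule continuous_on_compose2[OF phc]) (use pP Pn_def in auto)
      next
        fix s t
        obtain c where c: "\<And>m. p (smul_shift s m t) = (\<Sum>k\<le>n. sc (of_nat m ^ k) (c k))"
          using pP unfolding Pn_def by blast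
        show "\<exists>c. \<forall>m. \<phi> (p (smul_shift s m t)) = (\<Sum>k\<le>n. of_nat m ^ k * c k)"
          by (rule exI[of _ "\<lambda>k. \<phi> (c k)"]) (simp add: c Ad.sum phsc)
      qed
      from rep[rule_format, OF this, of y] have "\<phi> (p y) = (\<Sum>i<l. \<phi> (p (jj i)) * q i y)" by simp
      moreover have "\<phi> (\<Sum>i<l. sc (q i y) (p (jj i))) = (\<Sum>i<l. \<phi> (p (jj i)) * q i y)"
        by (simp add: Ad.sum phsc mult.commute)
      ultimately show False using phne by (simp add: Ad.diff)
    qed
    then show "p \<in> {(\<lambda>j. \<Sum>i<l. sc (q i j) (x i)) | (l::nat) q x. \<forall>i<l. q i \<in> (Pn (*) n :: ('j \<Rightarrow> complex) set)}"
      apply (intro CollectI exI[of _ l] exI[of _ q] exI[of _ "\<lambda>i. p (jj i)"] conjI)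
      using qP P_def by auto
  next
    fix p assume "p \<in> {(\<lambda>j. \<Sum>i<l. sc (q i j) (x i)) | (l::nat) q x. \<forall>i<l. q i \<in> (Pn (*) n :: ('j \<Rightarrow> complex) set)}"
    then obtain l :: nat and q xs where p: "p = (\<lambda>j. \<Sum>i<l. sc (q i j) (xs i))"
      and qP: "\<forall>i<l. q i \<in> (Pn (*) n :: ('j \<Rightarrow> complex) set)" by blast
    show "p \<in> Pn sc n" unfolding Pn_def
    proof (intro CollectI conjI allI)
      show "continuous_on UNIV p" unfolding p
        by (intro L.cont_sum L.cont_sc continuous_on_const) (use qP Pn_def in auto)
    next
      fix s t
      have "\<forall>i. \<exists>c. i < l \<longrightarrow> (\<forall>m. q i (smul_shift s m t) = (\<Sum>k\<le>n. of_nat m ^ k * c k))"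
        using qP unfolding Pn_def by blast
      then obtain C where C: "\<And>i m. i < l \<Longrightarrow> q i (smul_shift s m t) = (\<Sum>k\<le>n. of_nat m ^ k * C i k)"
        by metis
      show "\<exists>c. \<forall>m. p (smul_shift s m t) = (\<Sum>k\<le>n. sc (of_nat m ^ k) (c k))"
      proof (intro exI[of _ "\<lambda>k. \<Sum>i<l. sc (C i k) (xs i)"] allI)
        fix m
        have "p (smul_shift s m t) = (\<Sum>i<l. sc (\<Sum>k\<le>n. of_nat m ^ k * C i k) (xs i))"
          unfolding p by (intro sum.cong) (auto simp: C)
        also have "\<dots> = (\<Sum>i<l. \<Sum>k\<le>n. sc (of_nat m ^ k) (sc (C i k) (xs i)))"
          by (simp add: L.V.scale_sum_left)
        also have "\<dots> = (\<Sum>k\<le>n. \<Sum>i<l. sc (of_nat m ^ k) (sc (C i k) (xs i)))"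
          by (rule sum.swap)
        also have "\<dots> = (\<Sum>k\<le>n. sc (of_nat m ^ k) (\<Sum>i<l. sc (C i k) (xs i)))"
          by (simp add: L.V.scale_sum_right)
        finally show "p (smul_shift s m t) = (\<Sum>k\<le>n. sc (of_nat m ^ k) (\<Sum>i<l. sc (C i k) (xs i)))" .
      qed
    qed
  qed
qed

end
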